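(* Let $N$ be a positive integer, let $p_1,\ldots,p_N$ be independent beta-distributed random variables whose parameters are all at least $1$, for each $n$ let $\hat{p}_n$ be independent of everything else and distributed identically to $p_n$, and for each $n$ let $b_n$ be distributed, conditionally on $p_n$, as $\mathrm{Bern}(p_n)$. Then for all $\delta\in(0,1)$, $$\mathbb{E}\left[\min_{n \in \{1,\ldots,N\}} \left(\sqrt{6\, \mathbb{I}(p_n; b_n) \log \frac{2 N}{\delta}} - |p_n - \hat{p}_n| + \delta \right) \right] \geq 0.$$
   Context: $\mathbb{I}(p_n;b_n)$ denotes the mutual information between $p_n$ and $b_n$ (a nonnegative real number). *)

theory Defs
  imports "HOL-Probability.Probability"
begin

definition beta_density :: "real \<Rightarrow> real \<Rightarrow> real \<Rightarrow> real" where
  "beta_density a b x =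
     (if 0 < x \<and> x < 1 then x powr (a - 1) * (1 - x) powr (b - 1) / Beta a b else 0)"

text \<open>Joint density of (p, b) where p ~ Beta(a,b) and, conditionally on p, b ~ Bern(p),
  w.r.t. lborel \<otimes> counting measure on bool (True = 1).\<close>
definition beta_bern_density :: "real \<Rightarrow> real \<Rightarrow> real \<times> bool \<Rightarrow> real" where
  "beta_bern_density a b z =
     beta_density a b (fst z) * (if snd z then fst z else 1 - fst z)"

end

theory Submission
  imports Defs
begin


definition K :: "real \<Rightarrow> real \<Rightarrow> real \<Rightarrow> real" where
  "K a b x = x powr (a - 1) * (1 - x) powr (b - 1)"

lemma Beta_pos_real: "0 < a \<Longrightarrow> 0 < b \<Longrightarrow> 0 < Beta a (b::real)"
  by (simp add: Beta_def Gamma_real_pos)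

lemma beta_density_eq:
  "beta_density a b x = indicator {0..1} x * (K a b x / Beta a b)"
  by (auto simp: beta_density_def K_def indicator_def)

lemma K_nonneg: "0 \<le> K a b x"
  by (simp add: K_def)

lemma K_le1: "1 \<le> a \<Longrightarrow> 1 \<le> b \<Longrightarrow> x \<in> {0..1} \<Longrightarrow> K a b x \<le> 1"
  unfolding K_def
  by (auto intro!: mult_le_one powr_le1)

lemma K_meas[measurable]: "K a b \<in> borel_measurable borel"
  unfolding K_def by measurable

lemma beta_density_nonneg: "0 < a \<Longrightarrow> 0 < b \<Longrightarrow> 0 \<le> beta_density a b x"
  using Beta_pos_real[of a b] by (simp add: beta_density_eq K_nonneg)


lemma beta_set_integrable:
  fixes h :: "real \<Rightarrow> real"
  assumes ab: "1 \<le> a" "1 \<le> b" and h: "continuous_on UNIV h"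
  shows "set_integrable lborel {0..1} (\<lambda>x. K a b x * h x)"
proof -
  have hm[measurable]: "h \<in> borel_measurable borel"
    using h by (simp add: borel_measurable_continuous_onI)
  have "compact (h ` {0..1})"
    by (rule compact_continuous_image) (auto intro: continuous_on_subset[OF h])
  then obtain C where C: "\<And>x. x \<in> {0..1} \<Longrightarrow> \<bar>h x\<bar> \<le> C"
    by (metis bounded_iff compact_imp_bounded image_eqI real_norm_def)
  show ?thesis
    unfolding set_integrable_def
  proof (rule Bochner_Integration.integrable_bound)
    show "integrable lborel (\<lambda>x. C * indicator {0..1::real} x)"
      by (intro integrable_mult_right integrable_real_indicator) auto
    show "(\<lambda>x. indicat_real {0..1} x *\<^sub>R (K a b x * h x)) \<in> borel_measurable lborel"
      by measurable
    show "AE x in lborel. norm (indicat_real {0..1} x *\<^sub>R (K a b x * h x)) \<le> norm (C * indicat_real {0..1} x)"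
    proof (rule AE_I2)
      fix x :: real
      show "norm (indicat_real {0..1} x *\<^sub>R (K a b x * h x)) \<le> norm (C * indicat_real {0..1} x)"
      proof (cases "x \<in> {0..1}")
        case True
        have "\<bar>K a b x * h x\<bar> \<le> 1 * C"
          unfolding abs_mult using K_le1[OF ab True] C[OF True] K_nonneg[of a b x]
          by (intro mult_mono) auto
        then show ?thesis using True C[OF True] by (auto simp: indicator_def)
      qed (auto simp: indicator_def)
    qed
  qed
qed

lemma beta_expect:
  fixes h :: "real \<Rightarrow> real" and X :: "'a \<Rightarrow> real"
  assumes M: "prob_space M"
    and X: "distributed M lborel X (\<lambda>x. ennreal (beta_density a b x))"
    and ab: "1 \<le> a" "1 \<le> b" and h: "continuous_on UNIV h"
  shows "prob_space.expectation M (\<lambda>\<omega>. h (X \<omega>)) = integral {0..1} (\<lambda>x. K a b x * h x) / Beta a b"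
    and "(\<lambda>x. K a b x * h x) integrable_on {0..1}"
proof -
  have hm[measurable]: "h \<in> borel_measurable borel"
    using h by (simp add: borel_measurable_continuous_onI)
  have B: "0 < Beta a b" using ab by (intro Beta_pos_real) auto
  have SI: "set_integrable lborel {0..1} (\<lambda>x. K a b x * h x)"
    by (rule beta_set_integrable[OF ab h])
  have "prob_space.expectation M (\<lambda>\<omega>. h (X \<omega>)) = (\<integral>x. beta_density a b x * h x \<partial>lborel)"
    by (rule distributed_integral[OF X, symmetric]) (use ab beta_density_nonneg in auto)
  also have "\<dots> = (\<integral>x. indicator {0..1} x *\<^sub>R (K a b x * h x) \<partial>lborel) / Beta a b"
    by (simp add: beta_density_eq mult_ac)
  also have "(\<integral>x. indicator {0..1} x *\<^sub>R (K a b x * h x) \<partial>lborel) = integral {0..1} (\<lambda>x. K a b x * h x)"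
    using set_borel_integral_eq_integral(2)[OF SI] by (simp add: set_lebesgue_integral_def)
  finally show "prob_space.expectation M (\<lambda>\<omega>. h (X \<omega>)) = integral {0..1} (\<lambda>x. K a b x * h x) / Beta a b" .
  show "(\<lambda>x. K a b x * h x) integrable_on {0..1}"
    by (rule set_borel_integral_eq_integral(1)[OF SI])
qed



lemma powr_split1: "0 < (x::real) \<Longrightarrow> x powr a = x powr (a - 1) * x"
proof -
  assume x: "0 < x"
  have "x powr a = x powr ((a - 1) + 1)" by simp
  also have "\<dots> = x powr (a - 1) * x powr 1" by (rule powr_add)
  also have "\<dots> = x powr (a - 1) * x" using x by simp
  finally show ?thesis .
qed

lemma stein_has_integral:
  fixes \<phi> \<phi>' :: "real \<Rightarrow> real"
  assumes ab: "1 \<le> a" "1 \<le> b"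
    and d\<phi>: "\<And>x. (\<phi> has_real_derivative \<phi>' x) (at x)"
  shows "((\<lambda>x. K a b x * ((a - (a + b) * x) * \<phi> x + x * (1 - x) * \<phi>' x)) has_integral 0) {0..1}"
proof -
  define H where "H x = x powr a * (1 - x) powr b * \<phi> x" for x
  have c\<phi>: "continuous_on UNIV \<phi>"
    using d\<phi> by (meson DERIV_isCont continuous_at_imp_continuous_on)
  have cH: "continuous_on {0..1} H"
    unfolding H_def using ab
    by (intro continuous_intros continuous_on_powr' continuous_on_subset[OF c\<phi>]) auto
  have dH: "(H has_vector_derivative
       (K a b x * ((a - (a + b) * x) * \<phi> x + x * (1 - x) * \<phi>' x))) (at x)"
    if x: "x \<in> {0<..<1}" for x
  proof -
    have x0: "0 < x" and x1: "0 < 1 - x" using x by auto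
    have "(H has_real_derivative
       (a * x powr (a - 1) * (1 - x) powr b * \<phi> x - b * x powr a * (1 - x) powr (b - 1) * \<phi> x
        + x powr a * (1 - x) powr b * \<phi>' x)) (at x)"
      unfolding H_def using x0 x1
      by (auto intro!: derivative_eq_intros d\<phi> simp: algebra_simps)
    moreover have "a * x powr (a - 1) * (1 - x) powr b * \<phi> x - b * x powr a * (1 - x) powr (b - 1) * \<phi> x
        + x powr a * (1 - x) powr b * \<phi>' x = K a b x * ((a - (a + b) * x) * \<phi> x + x * (1 - x) * \<phi>' x)"
    proof -
      have ea: "x powr a = x powr (a - 1) * x" by (rule powr_split1[OF x0])
      have eb: "(1 - x) powr b = (1 - x) powr (b - 1) * (1 - x)" by (rule powr_split1[OF x1])
      show ?thesis unfolding K_def ea eb by (simp add: algebra_simps)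
    qed
    ultimately show ?thesis
      by (simp add: has_real_derivative_iff_has_vector_derivative)
  qed
  have "((\<lambda>x. K a b x * ((a - (a + b) * x) * \<phi> x + x * (1 - x) * \<phi>' x)) has_integral (H 1 - H 0)) {0..1}"
    by (rule fundamental_theorem_of_calculus_interior[OF _ cH dH]) auto
  moreover have "H 1 = 0" "H 0 = 0" using ab by (auto simp: H_def)
  ultimately show ?thesis by simp
qed



definition K2 :: "real \<Rightarrow> real \<Rightarrow> real \<Rightarrow> real" where
  "K2 a b x = (if a = 1 then 1 else x powr (a - 1)) * (if b = 1 then 1 else (1 - x) powr (b - 1))"

lemma K2_eq: "0 < x \<Longrightarrow> x < 1 \<Longrightarrow> K2 a b x = K a b x"
  by (auto simp: K2_def K_def)

lemma K2_cont: "1 \<le> a \<Longrightarrow> 1 \<le> b \<Longrightarrow> continuous_on {0..1} (K2 a b)"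
  unfolding K2_def
  by (cases "a = 1"; cases "b = 1") (auto intro!: continuous_intros continuous_on_powr')

lemma K2_nonneg: "0 \<le> K2 a b x"
  by (simp add: K2_def)

lemma has_integral_K_K2:
  "((\<lambda>x. K a b x * h x) has_integral I) {0..1} \<longleftrightarrow> ((\<lambda>x. K2 a b x * h x) has_integral I) {0..1}"
  by (rule has_integral_spike_eq[of "{0,1}"]) (auto simp: K2_eq)

lemma integral_K_K2:
  "integral {0..1} (\<lambda>x. K a b x * h x) = integral {0..1} (\<lambda>x. K2 a b x * h x)"
  by (rule integral_spike[of "{0,1}"]) (auto simp: K2_eq)

lemma K2_integral: "0 < a \<Longrightarrow> 0 < b \<Longrightarrow> ((K2 a b) has_integral Beta a b) {0..1}"
  using has_integral_K_K2[of a b "\<lambda>_. 1"] has_integral_Beta_real[of a b]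
  by (simp add: K_def)

lemma mgf_unnorm_bound:
  fixes a b l :: real
  assumes ab: "1 \<le> a" "1 \<le> b"
  defines "m \<equiv> a / (a + b)"
  shows "integral {0..1} (\<lambda>t. K2 a b t * exp (l * (t - m))) \<le> Beta a b * exp (l\<^sup>2 / (8 * (a + b)))"
proof -
  define \<nu> where "\<nu> = a + b"
  have \<nu>: "0 < \<nu>" using ab by (simp add: \<nu>_def)
  have B: "0 < Beta a b" using ab by (intro Beta_pos_real) auto
  have m01: "0 \<le> m" "m \<le> 1" using ab by (auto simp: m_def)
  have a_eq: "a = \<nu> * m" using \<nu> by (simp add: m_def \<nu>_def)
  have K2c: "continuous_on {0..1} (K2 a b)" by (rule K2_cont[OF ab])
  define S where "S l = integral {0..1} (\<lambda>t. K2 a b t * exp (l * (t - m)))" for l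
  define S' where "S' l = integral {0..1} (\<lambda>t. K2 a b t * ((t - m) * exp (l * (t - m))))" for l
  define G where "G l = integral {0..1} (\<lambda>t. K2 a b t * (t * (1 - t) * exp (l * (t - m))))" for l
  have int1: "(\<lambda>t. K2 a b t * exp (l * (t - m))) integrable_on {0..1}" for l
    by (intro integrable_continuous_interval continuous_intros K2c)
  have int2: "(\<lambda>t. K2 a b t * ((t - m) * exp (l * (t - m)))) integrable_on {0..1}" for l
    by (intro integrable_continuous_interval continuous_intros K2c)
  have int3: "(\<lambda>t. K2 a b t * (t * (1 - t) * exp (l * (t - m)))) integrable_on {0..1}" for l
    by (intro integrable_continuous_interval continuous_intros K2c)
  have dS: "(S has_real_derivative S' l) (at l)" for l
  proof -
    have cc: "continuous_on (UNIV \<times> {0..1}) (\<lambda>(l, t). K2 a b t * ((t - m) * exp (l * (t - m))))"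
    proof -
      have "continuous_on (UNIV \<times> {0..1}) (\<lambda>z. K2 a b (snd z))"
        by (rule continuous_on_compose2[OF K2c continuous_on_snd]) auto
      then show ?thesis
        by (simp add: split_beta, intro continuous_intros) auto
    qed
    have "((\<lambda>l. integral (cbox 0 1) (\<lambda>t. K2 a b t * exp (l * (t - m)))) has_field_derivative
           integral (cbox 0 1) (\<lambda>t. K2 a b t * ((t - m) * exp (l * (t - m))))) (at l within UNIV)"
    proof (rule leibniz_rule_field_derivative[where fx="\<lambda>l t. K2 a b t * ((t - m) * exp (l * (t - m)))"])
      fix x t :: real
      show "((\<lambda>x. K2 a b t * exp (x * (t - m))) has_real_derivative K2 a b t * ((t - m) * exp (x * (t - m)))) (at x within UNIV)"
        by (auto intro!: derivative_eq_intros)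
    next
      fix x :: real
      show "(\<lambda>t. K2 a b t * exp (x * (t - m))) integrable_on cbox 0 1"
        using int1[of x] by simp
    next
      show "continuous_on (UNIV \<times> cbox 0 1) (\<lambda>(x, t). K2 a b t * ((t - m) * exp (x * (t - m))))"
        using cc by simp
    qed auto
    then show ?thesis unfolding S'_def by (simp add: S_def[abs_def])
  qed
  have stein: "\<nu> * S' l = l * G l" for l
  proof -
    have "((\<lambda>x. K a b x * ((a - (a + b) * x) * exp (l * (x - m)) + x * (1 - x) * (l * exp (l * (x - m))))) has_integral 0) {0..1}"
      by (rule stein_has_integral[OF ab]) (auto intro!: derivative_eq_intros)
    then have "((\<lambda>x. K2 a b x * ((a - (a + b) * x) * exp (l * (x - m)) + x * (1 - x) * (l * exp (l * (x - m))))) has_integral 0) {0..1}"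
      by (simp add: has_integral_K_K2)
    moreover have "(\<lambda>x. K2 a b x * ((a - (a + b) * x) * exp (l * (x - m)) + x * (1 - x) * (l * exp (l * (x - m)))))
        = (\<lambda>x. l * (K2 a b x * (x * (1 - x) * exp (l * (x - m)))) - \<nu> * (K2 a b x * ((x - m) * exp (l * (x - m)))))"
    proof -
      have hx: "a - (a + b) * x = - (\<nu> * (x - m))" for x
        using \<nu> by (simp add: m_def \<nu>_def field_simps)
      show ?thesis unfolding hx by (rule ext) (simp add: algebra_simps)
    qed
    ultimately have "((\<lambda>x. l * (K2 a b x * (x * (1 - x) * exp (l * (x - m)))) - \<nu> * (K2 a b x * ((x - m) * exp (l * (x - m))))) has_integral 0) {0..1}"
      by simp
    then have "integral {0..1} (\<lambda>x. l * (K2 a b x * (x * (1 - x) * exp (l * (x - m)))) - \<nu> * (K2 a b x * ((x - m) * exp (l * (x - m))))) = 0"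
      by (rule integral_unique)
    moreover have "integral {0..1} (\<lambda>x. l * (K2 a b x * (x * (1 - x) * exp (l * (x - m)))) - \<nu> * (K2 a b x * ((x - m) * exp (l * (x - m)))))
       = l * G l - \<nu> * S' l"
      unfolding G_def S'_def
      by (subst integral_diff) (auto intro!: integrable_on_mult_right int2 int3 simp: integral_mult_right)
    ultimately show ?thesis by simp
  qed
  have G_le: "G l \<le> S l / 4" for l
  proof -
    have "G l \<le> integral {0..1} (\<lambda>t. (1/4) * (K2 a b t * exp (l * (t - m))))"
      unfolding G_def
    proof (rule integral_le[OF int3])
      show "(\<lambda>t. (1/4) * (K2 a b t * exp (l * (t - m)))) integrable_on {0..1}"
        using int1 by (rule integrable_on_mult_right)
      fix t :: real assume "t \<in> {0..1}"
      have "t * (1 - t) \<le> 1/4" using zero_le_power2[of "t - 1/2"] by (simp add: power2_eq_square algebra_simps)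
      then have "t * (1 - t) * exp (l * (t - m)) \<le> 1/4 * exp (l * (t - m))"
        by (intro mult_right_mono) auto
      then show "K2 a b t * (t * (1 - t) * exp (l * (t - m))) \<le> 1/4 * (K2 a b t * exp (l * (t - m)))"
        using K2_nonneg[of a b t] by (metis mult.left_commute mult_left_mono)
    qed
    then show ?thesis by (simp add: S_def)
  qed
  have G_ge: "0 \<le> G l" for l
    unfolding G_def by (rule integral_nonneg[OF int3]) (auto intro!: mult_nonneg_nonneg K2_nonneg)
  have S_pos: "0 < S l" for l
  proof -
    have "integral {0..1} (\<lambda>t. exp (- \<bar>l\<bar>) * K2 a b t) \<le> S l"
      unfolding S_def
    proof (rule integral_le)
      show "(\<lambda>t. exp (- \<bar>l\<bar>) * K2 a b t) integrable_on {0..1}"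
        by (intro integrable_continuous_interval continuous_intros K2c)
      show "(\<lambda>t. K2 a b t * exp (l * (t - m))) integrable_on {0..1}" by (rule int1)
      fix t :: real assume t: "t \<in> {0..1}"
      have "\<bar>t - m\<bar> \<le> 1" using t m01 by auto
      then have "\<bar>l * (t - m)\<bar> \<le> \<bar>l\<bar>" by (simp add: abs_mult mult_left_le)
      then have "exp (- \<bar>l\<bar>) \<le> exp (l * (t - m))" by auto
      then show "exp (- \<bar>l\<bar>) * K2 a b t \<le> K2 a b t * exp (l * (t - m))"
        using K2_nonneg[of a b t] by (simp add: mult.commute mult_left_mono)
    qed
    moreover have "integral {0..1} (\<lambda>t. exp (- \<bar>l\<bar>) * K2 a b t) = exp (- \<bar>l\<bar>) * Beta a b"
      using K2_integral[of a b] ab by (simp add: integral_unique)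
    moreover have "0 < exp (- \<bar>l\<bar>) * Beta a b" using B by simp
    ultimately show ?thesis by linarith
  qed
  define \<Phi> where "\<Phi> l = ln (S l) - l\<^sup>2 / (8 * \<nu>)" for l
  have d\<Phi>: "(\<Phi> has_real_derivative (S' l / S l - l / (4 * \<nu>))) (at l)" for l
    unfolding \<Phi>_def using S_pos[of l] \<nu>
    by (auto intro!: derivative_eq_intros dS simp: power2_eq_square field_simps)
  have key: "S' l / S l - l / (4 * \<nu>) = l * (G l / S l - 1/4) / \<nu>" for l
    using S_pos[of l] \<nu> stein[of l] by (simp add: field_simps)
  have S0: "S 0 = Beta a b"
    using K2_integral[of a b] ab by (simp add: S_def integral_unique)
  have "\<Phi> l \<le> \<Phi> 0"
  proof (cases "0 \<le> l")
    case True
    show ?thesis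
    proof (rule DERIV_nonpos_imp_nonincreasing[OF True])
      fix x :: real assume x: "0 \<le> x" "x \<le> l"
      have "G x / S x \<le> 1/4" using G_le[of x] S_pos[of x] by (simp add: divide_simps)
      then have "x * (G x / S x - 1/4) / \<nu> \<le> 0"
        using x \<nu> by (intro divide_nonpos_pos mult_nonneg_nonpos) auto
      then show "\<exists>y. (\<Phi> has_real_derivative y) (at x) \<and> y \<le> 0"
        using d\<Phi>[of x] key[of x] by auto
    qed
  next
    case False
    show ?thesis
    proof (rule DERIV_nonneg_imp_nondecreasing[of l 0 \<Phi>])
      show "l \<le> 0" using False by simp
      fix x :: real assume x: "l \<le> x" "x \<le> 0"
      have "G x / S x \<le> 1/4" using G_le[of x] S_pos[of x] by (simp add: divide_simps)
      then have "0 \<le> x * (G x / S x - 1/4) / \<nu>"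
        using x \<nu> by (intro divide_nonneg_pos mult_nonpos_nonpos) auto
      then show "\<exists>y. (\<Phi> has_real_derivative y) (at x) \<and> 0 \<le> y"
        using d\<Phi>[of x] key[of x] by auto
    qed
  qed
  then have "ln (S l) \<le> ln (Beta a b) + l\<^sup>2 / (8 * \<nu>)"
    by (simp add: \<Phi>_def S0)
  then have "S l \<le> exp (ln (Beta a b) + l\<^sup>2 / (8 * \<nu>))"
    using S_pos[of l] by (metis exp_le_cancel_iff exp_ln)
  also have "\<dots> = Beta a b * exp (l\<^sup>2 / (8 * \<nu>))"
    using B by (simp add: exp_add)
  finally show ?thesis by (simp add: S_def \<nu>_def)
qed



lemma beta_integrable:
  fixes h :: "real \<Rightarrow> real" and X :: "'a \<Rightarrow> real"
  assumes X: "distributed M lborel X (\<lambda>x. ennreal (beta_density a b x))"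
    and ab: "1 \<le> a" "1 \<le> b" and h: "continuous_on UNIV h"
  shows "integrable M (\<lambda>\<omega>. h (X \<omega>))"
proof -
  have hm[measurable]: "h \<in> borel_measurable borel"
    using h by (simp add: borel_measurable_continuous_onI)
  have SI: "integrable lborel (\<lambda>x. indicator {0..1} x *\<^sub>R (K a b x * h x))"
    using beta_set_integrable[OF ab h] by (simp add: set_integrable_def)
  have "integrable lborel (\<lambda>x. beta_density a b x * h x)"
    using integrable_divide[OF SI, of "Beta a b"] by (simp add: beta_density_eq mult_ac)
  then show ?thesis
    by (subst distributed_integrable[OF X, symmetric]) (use ab beta_density_nonneg in auto)
qed

lemma stein_expect:
  fixes \<phi> \<phi>' :: "real \<Rightarrow> real" and X :: "'a \<Rightarrow> real"
  assumes M: "prob_space M"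
    and X: "distributed M lborel X (\<lambda>x. ennreal (beta_density a b x))"
    and ab: "1 \<le> a" "1 \<le> b"
    and d\<phi>: "\<And>x. (\<phi> has_real_derivative \<phi>' x) (at x)" and c\<phi>': "continuous_on UNIV \<phi>'"
  shows "prob_space.expectation M (\<lambda>\<omega>. (a - (a + b) * X \<omega>) * \<phi> (X \<omega>) + X \<omega> * (1 - X \<omega>) * \<phi>' (X \<omega>)) = 0"
proof -
  have c\<phi>: "continuous_on UNIV \<phi>"
    using d\<phi> by (meson DERIV_isCont continuous_at_imp_continuous_on)
  have "prob_space.expectation M (\<lambda>\<omega>. (\<lambda>x. (a - (a + b) * x) * \<phi> x + x * (1 - x) * \<phi>' x) (X \<omega>))
     = integral {0..1} (\<lambda>x. K a b x * ((\<lambda>x. (a - (a + b) * x) * \<phi> x + x * (1 - x) * \<phi>' x) x)) / Beta a b"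
    by (rule beta_expect(1)[OF M X ab]) (intro continuous_intros c\<phi> c\<phi>')
  also have "\<dots> = 0"
    using integral_unique[OF stein_has_integral[OF ab d\<phi>]] by simp
  finally show ?thesis by simp
qed

lemma beta_moment_rec:
  fixes X :: "'a \<Rightarrow> real"
  assumes M: "prob_space M"
    and X: "distributed M lborel X (\<lambda>x. ennreal (beta_density a b x))"
    and ab: "1 \<le> a" "1 \<le> b"
  shows "(a + b + real k) * prob_space.expectation M (\<lambda>\<omega>. X \<omega> ^ (Suc k))
       = (a + real k) * prob_space.expectation M (\<lambda>\<omega>. X \<omega> ^ k)"
proof -
  have "prob_space.expectation M (\<lambda>\<omega>. (a - (a + b) * X \<omega>) * X \<omega> ^ k + X \<omega> * (1 - X \<omega>) * (real k * X \<omega> ^ (k - 1))) = 0"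
    by (rule stein_expect[OF M X ab]) (auto intro!: derivative_eq_intros continuous_intros)
  moreover have "(\<lambda>\<omega>. (a - (a + b) * X \<omega>) * X \<omega> ^ k + X \<omega> * (1 - X \<omega>) * (real k * X \<omega> ^ (k - 1)))
      = (\<lambda>\<omega>. (a + real k) * X \<omega> ^ k - (a + b + real k) * X \<omega> ^ Suc k)"
  proof (rule ext)
    fix \<omega>
    show "(a - (a + b) * X \<omega>) * X \<omega> ^ k + X \<omega> * (1 - X \<omega>) * (real k * X \<omega> ^ (k - 1))
      = (a + real k) * X \<omega> ^ k - (a + b + real k) * X \<omega> ^ Suc k"
    proof (cases k)
      case 0 then show ?thesis by (simp add: algebra_simps)
    next
      case (Suc j)
      then show ?thesis by (simp add: algebra_simps)
    qed
  qed
  moreover have "integrable M (\<lambda>\<omega>. X \<omega> ^ k)" "integrable M (\<lambda>\<omega>. X \<omega> ^ Suc k)"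
    by (rule beta_integrable[OF X ab], intro continuous_intros)+
  ultimately show ?thesis by simp
qed

lemma beta_mgf:
  fixes X :: "'a \<Rightarrow> real"
  assumes M: "prob_space M"
    and X: "distributed M lborel X (\<lambda>x. ennreal (beta_density a b x))"
    and ab: "1 \<le> a" "1 \<le> b"
  shows "prob_space.expectation M (\<lambda>\<omega>. exp (l * (X \<omega> - a / (a + b)))) \<le> exp (l\<^sup>2 / (8 * (a + b)))"
proof -
  have B: "0 < Beta a b" using ab by (intro Beta_pos_real) auto
  have "prob_space.expectation M (\<lambda>\<omega>. (\<lambda>x. exp (l * (x - a / (a + b)))) (X \<omega>))
     = integral {0..1} (\<lambda>x. K a b x * (\<lambda>x. exp (l * (x - a / (a + b)))) x) / Beta a b"
    by (rule beta_expect(1)[OF M X ab]) (intro continuous_intros)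
  also have "\<dots> = integral {0..1} (\<lambda>x. K2 a b x * exp (l * (x - a / (a + b)))) / Beta a b"
    by (simp add: integral_K_K2)
  also have "\<dots> \<le> Beta a b * exp (l\<^sup>2 / (8 * (a + b))) / Beta a b"
    by (intro divide_right_mono mgf_unnorm_bound ab) (use B in simp)
  also have "\<dots> = exp (l\<^sup>2 / (8 * (a + b)))" using B by simp
  finally show ?thesis by simp
qed



definition kl :: "real \<Rightarrow> real \<Rightarrow> real" where
  "kl m x = x * ln (x / m) + (1 - x) * ln ((1 - x) / (1 - m))"

definition qpol :: "real \<Rightarrow> real \<Rightarrow> real" where
  "qpol m x = 3 / (8 * m * (1 - m)) * (x - m)^2 + (2 * m - 1) / (24 * m^2 * (1 - m)^2) * (x - m)^3"

lemma kl_ge_qpol: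
  assumes m: "0 < m" "m < 1" and x: "0 < x" "x < 1"
  shows "qpol m x \<le> kl m x"
proof -
  have nz: "m \<noteq> 0" "1 - m \<noteq> 0" "m - 1 \<noteq> 0" using m by auto
  define D where "D x = kl m x - qpol m x" for x
  define D' where "D' x = ln (x / m) - ln ((1 - x) / (1 - m))
      - (3 / (4 * m * (1 - m)) * (x - m) + (2 * m - 1) / (8 * m^2 * (1 - m)^2) * (x - m)^2)" for x
  define D'' where "D'' x = 1 / x + 1 / (1 - x)
      - (3 / (4 * m * (1 - m)) + (2 * m - 1) / (4 * m^2 * (1 - m)^2) * (x - m))" for x
  have dD: "(D has_real_derivative D' t) (at t)" if "0 < t" "t < 1" for t
    unfolding D_def kl_def qpol_def D'_def using that m nz
    by (auto intro!: derivative_eq_intros simp: power2_eq_square)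
       (simp add: divide_simps; simp add: algebra_simps)
  have dD': "(D' has_real_derivative D'' t) (at t)" if "0 < t" "t < 1" for t
    unfolding D''_def D'_def using that m nz
    by (auto intro!: derivative_eq_intros simp: power2_eq_square)
       (simp add: divide_simps; simp add: algebra_simps)
  have D''_nn: "0 \<le> D'' t" if t: "0 < t" "t < 1" for t
  proof -
    have h1: "1 / m - t / (4 * m^2) \<le> 1 / t"
    proof -
      have "0 \<le> (2 * m - t)^2 / (t * 4 * m^2)" using t m by simp
      also have "(2 * m - t)^2 / (t * 4 * m^2) = 1 / t - (1 / m - t / (4 * m^2))"
        using t m nz by (simp add: divide_simps power2_eq_square; simp add: algebra_simps)
      finally show ?thesis by simp
    qed
    have h2: "1 / (1 - m) - (1 - t) / (4 * (1 - m)^2) \<le> 1 / (1 - t)"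
    proof -
      have "0 \<le> (2 * (1 - m) - (1 - t))^2 / ((1 - t) * 4 * (1 - m)^2)" using t m by simp
      also have "(2 * (1 - m) - (1 - t))^2 / ((1 - t) * 4 * (1 - m)^2) = 1 / (1 - t) - (1 / (1 - m) - (1 - t) / (4 * (1 - m)^2))"
        using t m nz by (simp add: divide_simps power2_eq_square; simp add: algebra_simps)
      finally show ?thesis by simp
    qed
    have h3: "3 / (4 * m * (1 - m)) + (2 * m - 1) / (4 * m^2 * (1 - m)^2) * (t - m)
        = (1 / m - t / (4 * m^2)) + (1 / (1 - m) - (1 - t) / (4 * (1 - m)^2))"
      using m nz by (simp add: divide_simps power2_eq_square; simp add: algebra_simps)
    show ?thesis unfolding D''_def h3 using h1 h2 by linarith
  qed
  have D'_mono: "D' y \<le> D' z" if "0 < y" "y \<le> z" "z < 1" for y z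
    using that by (intro DERIV_nonneg_imp_nondecreasing[of y z D'])
      (auto intro!: exI[of _ "D'' _"] dD' D''_nn)
  have D'm: "D' m = 0" using m by (simp add: D'_def)
  have Dm: "D m = 0" using m by (simp add: D_def kl_def qpol_def)
  have "D m \<le> D x"
  proof (cases "x \<le> m")
    case True
    show ?thesis
    proof (rule DERIV_nonpos_imp_nonincreasing[of x m D, OF True])
      fix t assume t: "x \<le> t" "t \<le> m"
      have "D' t \<le> 0" using D'_mono[of t m] t x m D'm by auto
      then show "\<exists>y. (D has_real_derivative y) (at t) \<and> y \<le> 0"
        using dD[of t] t x m by auto
    qed
  next
    case False
    show ?thesis
    proof (rule DERIV_nonneg_imp_nondecreasing[of m x D])
      show "m \<le> x" using False by simp
      fix t assume t: "m \<le> t" "t \<le> x"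
      have "0 \<le> D' t" using D'_mono[of m t] t x m D'm by auto
      then show "\<exists>y. (D has_real_derivative y) (at t) \<and> 0 \<le> y"
        using dD[of t] t x m by auto
    qed
  qed
  then show ?thesis using Dm by (simp add: D_def)
qed



lemma Eq_bound:
  fixes X :: "'a \<Rightarrow> real"
  assumes M: "prob_space M"
    and X: "distributed M lborel X (\<lambda>x. ennreal (beta_density a b x))"
    and ab: "1 \<le> a" "1 \<le> b"
  shows "1 \<le> 6 * (a + b) * prob_space.expectation M (\<lambda>\<omega>. qpol (a / (a + b)) (X \<omega>))"
proof -
  interpret prob_space M by fact
  define \<nu> where "\<nu> = a + b"
  define m where "m = a / \<nu>"
  have \<nu>: "0 < \<nu>" using ab by (simp add: \<nu>_def)
  have I: "integrable M (\<lambda>\<omega>. X \<omega> ^ k)" for k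
    by (rule beta_integrable[OF X ab], intro continuous_intros)
  have E0: "expectation (\<lambda>\<omega>. X \<omega> ^ 0) = 1" by (simp add: prob_space)
  have R: "(a + b + real k) * expectation (\<lambda>\<omega>. X \<omega> ^ (Suc k)) = (a + real k) * expectation (\<lambda>\<omega>. X \<omega> ^ k)" for k
    by (rule beta_moment_rec[OF M X ab])
  define E1 where "E1 = expectation (\<lambda>\<omega>. X \<omega> ^ 1)"
  define E2 where "E2 = expectation (\<lambda>\<omega>. X \<omega> ^ 2)"
  define E3 where "E3 = expectation (\<lambda>\<omega>. X \<omega> ^ 3)"
  have e1: "E1 = a / \<nu>" using R[of 0] E0 \<nu> by (simp add: E1_def \<nu>_def field_simps)
  have e2: "E2 = (a + 1) / (\<nu> + 1) * E1" using R[of 1] \<nu>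
    by (simp add: E1_def E2_def \<nu>_def field_simps numeral_2_eq_2)
  have e3: "E3 = (a + 2) / (\<nu> + 2) * E2" using R[of 2] \<nu>
    by (simp add: E3_def E2_def \<nu>_def field_simps numeral_3_eq_3 numeral_2_eq_2)
  define c2 where "c2 = 3 / (8 * m * (1 - m))"
  define c3 where "c3 = (2 * m - 1) / (24 * m^2 * (1 - m)^2)"
  have q_eq: "(\<lambda>\<omega>. qpol (a / (a + b)) (X \<omega>)) = (\<lambda>\<omega>. (c2 * m^2 - c3 * m^3) * X \<omega> ^ 0
       + (3 * c3 * m^2 - 2 * c2 * m) * X \<omega> ^ 1 + (c2 - 3 * c3 * m) * X \<omega> ^ 2 + c3 * X \<omega> ^ 3)"
  proof -
    have am: "a / (a + b) = m" by (simp add: m_def \<nu>_def)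
    show ?thesis unfolding am qpol_def c2_def[symmetric] c3_def[symmetric]
      by (rule ext) (simp add: power2_eq_square power3_eq_cube algebra_simps)
  qed
  have Eq: "expectation (\<lambda>\<omega>. qpol (a / (a + b)) (X \<omega>)) =
     (c2 * m^2 - c3 * m^3) + (3 * c3 * m^2 - 2 * c2 * m) * E1 + (c2 - 3 * c3 * m) * E2 + c3 * E3"
  proof -
    have i1: "integrable M X" using I[of 1] by simp
    have i2: "integrable M (\<lambda>\<omega>. (X \<omega>)^2)" using I[of 2] by simp
    have i3: "integrable M (\<lambda>\<omega>. (X \<omega>)^3)" using I[of 3] by simp
    show ?thesis unfolding q_eq using i1 i2 i3 E0 by (simp add: E1_def E2_def E3_def)
  qed
  define P where "P = a * b"
  have P: "\<nu> - 1 \<le> P"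
  proof -
    have "0 \<le> (a - 1) * (b - 1)" using ab by simp
    then show ?thesis by (simp add: P_def \<nu>_def algebra_simps)
  qed
  have a0: "0 < a" "0 < b" using ab by auto
  have m01: "0 < m" "m < 1" using a0 \<nu> by (auto simp: m_def \<nu>_def)
  have aeq: "a = \<nu> * m" using \<nu> by (simp add: m_def)
  have beq: "b = \<nu> * (1 - m)" using \<nu> by (simp add: m_def \<nu>_def field_simps)
  have Peq: "P = \<nu>^2 * (m * (1 - m))" unfolding P_def aeq beq by (simp add: power2_eq_square algebra_simps)
  define V where "V = E2 - 2 * m * E1 + m^2"
  define \<mu> where "\<mu> = E3 - 3 * m * E2 + 3 * m^2 * E1 - m^3"
  have Eq2: "expectation (\<lambda>\<omega>. qpol (a / (a + b)) (X \<omega>)) = c2 * V + c3 * \<mu>"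
    unfolding Eq V_def \<mu>_def by (simp add: algebra_simps power2_eq_square power3_eq_cube)
  have E1m: "E1 = m" using e1 by (simp add: m_def)
  have E2m: "E2 = (\<nu> * m + 1) / (\<nu> + 1) * m" using e2 E1m aeq by simp
  have Vm: "V = m * (1 - m) / (\<nu> + 1)"
    unfolding V_def E2m E1m using \<nu> by (simp add: divide_simps power2_eq_square; simp add: algebra_simps)
  have \<mu>m: "\<mu> = 2 * m * (1 - m) * (1 - 2 * m) / ((\<nu> + 1) * (\<nu> + 2))"
    unfolding \<mu>_def e3 E2m E1m aeq using \<nu>
    by (simp add: divide_simps power2_eq_square power3_eq_cube; simp add: algebra_simps)
  have c2V: "c2 * V = 3 / (8 * (\<nu> + 1))"
    unfolding c2_def Vm using m01 \<nu> by (simp add: divide_simps; simp add: algebra_simps)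
  have c3\<mu>: "c3 * \<mu> = - ((1 - 2 * m)^2 / (12 * (m * (1 - m)) * (\<nu> + 1) * (\<nu> + 2)))"
    unfolding c3_def \<mu>m using m01 \<nu> by (simp add: divide_simps power2_eq_square; simp add: algebra_simps)
  have EqV: "expectation (\<lambda>\<omega>. qpol (a / (a + b)) (X \<omega>)) = 3 / (8 * (\<nu> + 1)) - (\<nu>^2 - 4 * P) / (12 * P * (\<nu> + 1) * (\<nu> + 2))"
  proof -
    have "(\<nu>^2 - 4 * P) / (12 * P * (\<nu> + 1) * (\<nu> + 2)) = (1 - 2 * m)^2 / (12 * (m * (1 - m)) * (\<nu> + 1) * (\<nu> + 2))"
      unfolding Peq using m01 \<nu> by (simp add: divide_simps power2_eq_square; simp add: algebra_simps)
    then show ?thesis using Eq2 c2V c3\<mu> by simp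
  qed
  have Ppos: "0 < P" using a0 by (simp add: P_def)
  have num: "0 \<le> P * (10 * \<nu>^2 + 28 * \<nu> - 16) - 4 * \<nu>^3"
  proof -
    have \<nu>2: "2 \<le> \<nu>" using ab by (simp add: \<nu>_def)
    have c: "0 \<le> 10 * \<nu>^2 + 28 * \<nu> - 16" using \<nu>2 zero_le_square[of \<nu>] unfolding power2_eq_square by linarith
    have "(\<nu> - 1) * (10 * \<nu>^2 + 28 * \<nu> - 16) \<le> P * (10 * \<nu>^2 + 28 * \<nu> - 16)"
      by (rule mult_right_mono[OF P c])
    moreover have "0 \<le> (\<nu> - 1) * (10 * \<nu>^2 + 28 * \<nu> - 16) - 4 * \<nu>^3"
    proof -
      have "(\<nu> - 1) * (10 * \<nu>^2 + 28 * \<nu> - 16) - 4 * \<nu>^3 = 6 * \<nu>^3 + 18 * \<nu>^2 - 44 * \<nu> + 16"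
        by (simp add: power2_eq_square power3_eq_cube algebra_simps)
      moreover have "12 * \<nu>^2 \<le> 6 * \<nu>^3" using \<nu>2 \<nu> by (simp add: power2_eq_square power3_eq_cube)
      moreover have "4 * \<nu> \<le> 2 * \<nu>^2" using mult_right_mono[OF \<nu>2, of \<nu>] \<nu> unfolding power2_eq_square by linarith
      ultimately show ?thesis using \<nu> by linarith
    qed
    ultimately show ?thesis by linarith
  qed
  have "6 * \<nu> * (3 / (8 * (\<nu> + 1)) - (\<nu>^2 - 4 * P) / (12 * P * (\<nu> + 1) * (\<nu> + 2))) - 1
      = (P * (10 * \<nu>^2 + 28 * \<nu> - 16) - 4 * \<nu>^3) / (8 * P * (\<nu> + 1) * (\<nu> + 2))"
    using \<nu> Ppos by (simp add: divide_simps power2_eq_square power3_eq_cube; simp add: algebra_simps)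
  moreover have "0 \<le> (P * (10 * \<nu>^2 + 28 * \<nu> - 16) - 4 * \<nu>^3) / (8 * P * (\<nu> + 1) * (\<nu> + 2))"
    using num \<nu> Ppos by simp
  ultimately show ?thesis using EqV by (simp add: \<nu>_def)
qed



lemma not_nonpos_Int_pos: "0 < (a::real) \<Longrightarrow> a \<notin> \<int>\<^sub>\<le>\<^sub>0"
  using nonpos_Ints_nonpos by force

lemma beta_bern_marg:
  assumes ab: "1 \<le> a" "1 \<le> b"
  shows "(\<integral>\<^sup>+x. ennreal (beta_bern_density a b (x, y)) \<partial>lborel) = ennreal (if y then a / (a + b) else b / (a + b))"
proof -
  have B: "0 < Beta a b" using ab by (intro Beta_pos_real) auto
  have a0: "0 < a" "0 < b" using ab by auto
  show ?thesis
  proof (cases y)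
    case True
    have eq: "ennreal (beta_bern_density a b (x, y)) = ennreal (indicator {0..1} x * (K a b x * x / Beta a b))" for x
      using True by (simp add: beta_bern_density_def beta_density_eq mult_ac)
    have hi: "((\<lambda>t. t powr (a + 1 - 1) * (1 - t) powr (b - 1)) has_integral Beta (a + 1) b) {0..1}"
      by (rule has_integral_Beta_real) (use a0 in auto)
    have "((\<lambda>t. K a b t * t) has_integral Beta (a + 1) b) {0..1}"
      by (rule has_integral_spike[OF _ _ hi, of "{0,1}"]) (auto simp: K_def powr_split1[of _ a])
    then have "((\<lambda>t. K a b t * t / Beta a b) has_integral Beta (a + 1) b / Beta a b) {0..1}"
      by (rule has_integral_divide)
    moreover have "Beta (a + 1) b / Beta a b = a / (a + b)"
      using Beta_plus1_left[OF not_nonpos_Int_pos[OF a0(1)], of b] B a0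
      by (simp add: field_simps)
    ultimately have "((\<lambda>t. K a b t * t / Beta a b) has_integral a / (a + b)) {0..1}" by simp
    then have "(\<integral>\<^sup>+x. ennreal (indicator {0..1} x * (K a b x * x / Beta a b)) \<partial>lborel) = ennreal (a / (a + b))"
      by (rule nn_integral_has_integral_lebesgue[rotated]) (use B K_nonneg in auto)
    moreover have "(\<integral>\<^sup>+x. ennreal (beta_bern_density a b (x, y)) \<partial>lborel) = (\<integral>\<^sup>+x. ennreal (indicator {0..1} x * (K a b x * x / Beta a b)) \<partial>lborel)"
      by (rule nn_integral_cong) (rule eq)
    ultimately show ?thesis using True by simp
  next
    case False
    have eq: "ennreal (beta_bern_density a b (x, y)) = ennreal (indicator {0..1} x * (K a b x * (1 - x) / Beta a b))" for x
      using False by (simp add: beta_bern_density_def beta_density_eq mult_ac)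
    have hi: "((\<lambda>t. t powr (a - 1) * (1 - t) powr (b + 1 - 1)) has_integral Beta a (b + 1)) {0..1}"
      by (rule has_integral_Beta_real) (use a0 in auto)
    have "((\<lambda>t. K a b t * (1 - t)) has_integral Beta a (b + 1)) {0..1}"
      by (rule has_integral_spike[OF _ _ hi, of "{0,1}"]) (auto simp: K_def powr_split1[of "1 - _" b])
    then have "((\<lambda>t. K a b t * (1 - t) / Beta a b) has_integral Beta a (b + 1) / Beta a b) {0..1}"
      by (rule has_integral_divide)
    moreover have "Beta a (b + 1) / Beta a b = b / (a + b)"
      using Beta_plus1_right[OF not_nonpos_Int_pos[OF a0(2)], of a] B a0
      by (simp add: field_simps)
    ultimately have "((\<lambda>t. K a b t * (1 - t) / Beta a b) has_integral b / (a + b)) {0..1}" by simp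
    then have "(\<integral>\<^sup>+x. ennreal (indicator {0..1} x * (K a b x * (1 - x) / Beta a b)) \<partial>lborel) = ennreal (b / (a + b))"
      by (rule nn_integral_has_integral_lebesgue[rotated]) (use B K_nonneg in auto)
    moreover have "(\<integral>\<^sup>+x. ennreal (beta_bern_density a b (x, y)) \<partial>lborel) = (\<integral>\<^sup>+x. ennreal (indicator {0..1} x * (K a b x * (1 - x) / Beta a b)) \<partial>lborel)"
      by (rule nn_integral_cong) (rule eq)
    ultimately show ?thesis using False by simp
  qed
qed

lemma abs_xlnx_le1: "0 < (x::real) \<Longrightarrow> x \<le> 1 \<Longrightarrow> \<bar>x * ln x\<bar> \<le> 1"
proof -
  assume x: "0 < x" "x \<le> 1"
  have "ln x \<le> 0" using x by simp
  then have u: "x * ln x \<le> 0" using x by (simp add: mult_nonneg_nonpos)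
  have "ln (1 / x) \<le> 1 / x - 1" using x by (intro ln_le_minus_one) auto
  then have "- ln x \<le> 1 / x - 1" using x by (simp add: ln_div)
  then have "x * (- ln x) \<le> x * (1 / x - 1)" using x by (intro mult_left_mono) auto
  then have "- (x * ln x) \<le> 1 - x" using x by (simp add: algebra_simps)
  then show ?thesis using u x by linarith
qed

lemma abs_xln_div_le: "0 < (x::real) \<Longrightarrow> x \<le> 1 \<Longrightarrow> 0 < m \<Longrightarrow> \<bar>x * ln (x / m)\<bar> \<le> 1 + \<bar>ln m\<bar>"
proof -
  assume x: "0 < x" "x \<le> 1" and m: "0 < m"
  have "x * ln (x / m) = x * ln x - x * ln m" using x m by (simp add: ln_div algebra_simps)
  moreover have "\<bar>x * ln m\<bar> \<le> \<bar>ln m\<bar>" using x by (simp add: abs_mult mult_left_le_one_le)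
  ultimately show ?thesis using abs_xlnx_le1[OF x] by linarith
qed

lemma beta_density_le: "1 \<le> a \<Longrightarrow> 1 \<le> b \<Longrightarrow> beta_density a b x \<le> indicator {0..1} x / Beta a b"
proof -
  assume ab: "1 \<le> a" "1 \<le> b"
  have B: "0 < Beta a b" using ab by (intro Beta_pos_real) auto
  show ?thesis
  proof (cases "x \<in> {0..1}")
    case True
    then show ?thesis using K_le1[OF ab True] B by (simp add: beta_density_eq divide_right_mono)
  qed (simp add: beta_density_eq)
qed

lemma MI_eq_kl:
  fixes X :: "'a \<Rightarrow> real" and B :: "'a \<Rightarrow> bool"
  assumes M: "prob_space M"
    and X: "distributed M lborel X (\<lambda>x. ennreal (beta_density a b x))"
    and XB: "distributed M (lborel \<Otimes>\<^sub>M count_space UNIV) (\<lambda>\<omega>. (X \<omega>, B \<omega>)) (\<lambda>z. ennreal (beta_bern_density a b z))"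
    and ab: "1 \<le> a" "1 \<le> b"
  shows "prob_space.mutual_information M (exp 1) lborel (count_space UNIV) X B
       = prob_space.expectation M (\<lambda>\<omega>. kl (a / (a + b)) (X \<omega>))"
proof -
  interpret prob_space M by fact
  interpret information_space M "exp 1" by standard simp
  have Bpos: "0 < Beta a b" using ab by (intro Beta_pos_real) auto
  define m where "m = a / (a + b)"
  have m01: "0 < m" "m < 1" using ab by (auto simp: m_def)
  define Py where "Py y = (if y then m else 1 - m)" for y :: bool
  have bm: "b / (a + b) = 1 - m" using ab by (simp add: m_def field_simps)
  have Py: "distributed M (count_space UNIV) B (\<lambda>y. ennreal (Py y))"
  proof -
    have "distributed M (count_space UNIV) B (\<lambda>y. \<integral>\<^sup>+x. ennreal (beta_bern_density a b (x, y)) \<partial>lborel)"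
      by (rule distr_marginal2[OF lborel.sigma_finite_measure_axioms sigma_finite_measure_count_space XB])
    then show ?thesis
      by (rule distributed_cong_density[THEN iffD1, rotated 3])
         (auto simp: beta_bern_marg[OF ab] Py_def m_def[symmetric] bm)
  qed
  have Px_nn: "0 \<le> beta_density a b x" for x using ab by (intro beta_density_nonneg) auto
  have Pxy_nn: "0 \<le> beta_bern_density a b z" for z
  proof (cases "fst z \<in> {0<..<1}")
    case True
    then show ?thesis using Px_nn[of "fst z"] by (auto simp: beta_bern_density_def intro!: mult_nonneg_nonneg)
  next
    case False
    then show ?thesis by (auto simp: beta_bern_density_def beta_density_def)
  qed
  have Py_nn: "0 \<le> Py y" for y using m01 by (simp add: Py_def)
  define f where "f z = beta_bern_density a b z * log (exp 1) (beta_bern_density a b z / (beta_density a b (fst z) * Py (snd z)))" for z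
  have MI: "mutual_information (exp 1) lborel (count_space UNIV) X B = integral\<^sup>L (lborel \<Otimes>\<^sub>M count_space UNIV) f"
    unfolding f_def
    by (rule mutual_information_distr[OF lborel.sigma_finite_measure_axioms sigma_finite_measure_count_space X _ Py _ XB])
       (auto simp: Px_nn Py_nn Pxy_nn)
  have fT: "f (x, True) = beta_density a b x * (x * ln (x / m))" for x
  proof (cases "x \<in> {0<..<1}")
    case True
    then have "0 < beta_density a b x" using Bpos by (simp add: beta_density_def K_def)
    then show ?thesis using True m01
      by (simp add: f_def beta_bern_density_def Py_def log_def)
  next
    case False
    then have "beta_density a b x = 0" by (auto simp: beta_density_def)
    then show ?thesis by (simp add: f_def beta_bern_density_def)
  qed
  have fF: "f (x, False) = beta_density a b x * ((1 - x) * ln ((1 - x) / (1 - m)))" for x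
  proof (cases "x \<in> {0<..<1}")
    case True
    then have "0 < beta_density a b x" using Bpos by (simp add: beta_density_def K_def)
    then show ?thesis using True m01
      by (simp add: f_def beta_bern_density_def Py_def log_def)
  next
    case False
    then have "beta_density a b x = 0" by (auto simp: beta_density_def)
    then show ?thesis by (simp add: f_def beta_bern_density_def)
  qed
  have Pxm[measurable]: "beta_density a b \<in> borel_measurable lborel"
    by (rule distributed_real_measurable[OF _ X]) (rule Px_nn)
  have Pxym[measurable]: "beta_bern_density a b \<in> borel_measurable (lborel \<Otimes>\<^sub>M count_space UNIV)"
    by (rule distributed_real_measurable[OF _ XB]) (rule Pxy_nn)
  have Pym[measurable]: "Py \<in> borel_measurable (count_space UNIV)" by simp
  have fm[measurable]: "f \<in> borel_measurable (lborel \<Otimes>\<^sub>M count_space UNIV)"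
    unfolding f_def by measurable
  define C where "C = (1 + \<bar>ln m\<bar> + \<bar>ln (1 - m)\<bar>) / Beta a b"
  have fbound: "\<bar>f z\<bar> \<le> C * indicator ({0..1} \<times> UNIV) z" for z
  proof -
    obtain x y where z: "z = (x, y)" by force
    show ?thesis
    proof (cases "x \<in> {0<..<1}")
      case False
      then have "beta_density a b x = 0" by (auto simp: beta_density_def)
      then have "f z = 0" using fT fF z by (cases y) auto
      moreover have "0 \<le> C" using Bpos by (simp add: C_def)
      ultimately show ?thesis by simp
    next
      case True
      have bd: "beta_density a b x \<le> 1 / Beta a b"
        using beta_density_le[OF ab, of x] True by simp
      have "\<bar>f z\<bar> \<le> (1 / Beta a b) * (1 + \<bar>ln m\<bar> + \<bar>ln (1 - m)\<bar>)"
      proof (cases y)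
        case True
        have "\<bar>x * ln (x / m)\<bar> \<le> 1 + \<bar>ln m\<bar>" using \<open>x \<in> {0<..<1}\<close> m01 by (intro abs_xln_div_le) auto
        then have "\<bar>x * ln (x / m)\<bar> \<le> 1 + \<bar>ln m\<bar> + \<bar>ln (1 - m)\<bar>" by linarith
        have "\<bar>f z\<bar> = beta_density a b x * \<bar>x * ln (x / m)\<bar>" using True z fT[of x] Px_nn[of x] by (simp add: abs_mult)
        also have "\<dots> \<le> (1 / Beta a b) * (1 + \<bar>ln m\<bar> + \<bar>ln (1 - m)\<bar>)"
          by (rule mult_mono) (use bd \<open>\<bar>x * ln (x / m)\<bar> \<le> 1 + \<bar>ln m\<bar> + \<bar>ln (1 - m)\<bar>\<close> Bpos in auto)
        finally show ?thesis .
      next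
        case False
        have "\<bar>(1 - x) * ln ((1 - x) / (1 - m))\<bar> \<le> 1 + \<bar>ln (1 - m)\<bar>" using \<open>x \<in> {0<..<1}\<close> m01 by (intro abs_xln_div_le) auto
        then have "\<bar>(1 - x) * ln ((1 - x) / (1 - m))\<bar> \<le> 1 + \<bar>ln m\<bar> + \<bar>ln (1 - m)\<bar>" by linarith
        have "\<bar>f z\<bar> = beta_density a b x * \<bar>(1 - x) * ln ((1 - x) / (1 - m))\<bar>" using False z fF[of x] Px_nn[of x] by (simp add: abs_mult)
        also have "\<dots> \<le> (1 / Beta a b) * (1 + \<bar>ln m\<bar> + \<bar>ln (1 - m)\<bar>)"
          by (rule mult_mono) (use bd \<open>\<bar>(1 - x) * ln ((1 - x) / (1 - m))\<bar> \<le> 1 + \<bar>ln m\<bar> + \<bar>ln (1 - m)\<bar>\<close> Bpos in auto)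
        finally show ?thesis .
      qed
      then show ?thesis using True z by (simp add: C_def indicator_def)
    qed
  qed
  have fint: "integrable (lborel \<Otimes>\<^sub>M count_space UNIV) f"
  proof (rule Bochner_Integration.integrable_bound)
    have "emeasure (lborel \<Otimes>\<^sub>M count_space UNIV) ({0..1::real} \<times> (UNIV :: bool set)) = emeasure lborel {0..1::real} * emeasure (count_space UNIV) (UNIV :: bool set)"
      by (rule sigma_finite_measure.emeasure_pair_measure_Times[OF sigma_finite_measure_count_space]) auto
    also have "\<dots> < \<infinity>" by (simp add: emeasure_count_space_finite ennreal_mult_less_top)
    finally have "integrable (lborel \<Otimes>\<^sub>M count_space UNIV) (indicator ({0..1::real} \<times> (UNIV :: bool set)) :: _ \<Rightarrow> real)"
      by (intro integrable_real_indicator) auto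
    then show "integrable (lborel \<Otimes>\<^sub>M count_space UNIV) (\<lambda>z. C * indicator ({0..1::real} \<times> (UNIV :: bool set)) z)"
      by (rule integrable_mult_right)
    show "AE z in lborel \<Otimes>\<^sub>M count_space UNIV. norm (f z) \<le> norm (C * indicator ({0..1::real} \<times> (UNIV :: bool set)) z)"
    proof (rule AE_I2)
      fix z :: "real \<times> bool"
      have C0: "0 \<le> C" using Bpos by (simp add: C_def)
      have "0 \<le> C * indicator ({0..1::real} \<times> (UNIV :: bool set)) z" using C0 by simp
      then show "norm (f z) \<le> norm (C * indicator ({0..1::real} \<times> (UNIV :: bool set)) z)"
        using fbound[of z] by simp
    qed
  qed (rule fm)
  interpret pair_sigma_finite lborel "count_space UNIV :: bool measure"
    by (intro pair_sigma_finite.intro lborel.sigma_finite_measure_axioms sigma_finite_measure_count_space)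
  have "integral\<^sup>L (lborel \<Otimes>\<^sub>M count_space UNIV) f = (\<integral>x. (\<integral>y. f (x, y) \<partial>count_space UNIV) \<partial>lborel)"
    by (rule integral_fst'[OF fint, symmetric])
  also have "\<dots> = (\<integral>x. beta_density a b x * kl m x \<partial>lborel)"
    by (intro Bochner_Integration.integral_cong refl)
       (simp add: lebesgue_integral_count_space_finite UNIV_bool fT fF kl_def algebra_simps)
  also have "\<dots> = expectation (\<lambda>\<omega>. kl m (X \<omega>))"
    by (rule distributed_integral[OF X]) (auto simp: kl_def Px_nn)
  finally show ?thesis using MI by (simp add: m_def)
qed



lemma half_sum: "(x::real) / (8 * c) + x / (8 * c) = x / (4 * c)"
proof -
  have "x / (8 * c) + x / (8 * c) = 2 * (x / (8 * c))" by simp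
  also have "\<dots> = x / (4 * c)" by simp
  finally show ?thesis .
qed

lemma AE_beta01:
  fixes X :: "'a \<Rightarrow> real"
  assumes X: "distributed M lborel X (\<lambda>x. ennreal (beta_density a b x))"
  shows "AE \<omega> in M. 0 < X \<omega> \<and> X \<omega> < 1"
proof -
  have Xm: "X \<in> measurable M lborel" by (rule distributed_measurable[OF X])
  have fm: "(\<lambda>x. ennreal (beta_density a b x)) \<in> borel_measurable lborel"
    by (rule distributed_borel_measurable[OF X])
  have "AE x in density lborel (\<lambda>x. ennreal (beta_density a b x)). 0 < x \<and> x < 1"
    by (subst AE_density[OF fm]) (auto intro!: AE_I2 simp: beta_density_def split: if_splits)
  then have "AE x in distr M lborel X. 0 < x \<and> x < 1"
    unfolding distributed_distr_eq_density[OF X] .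
  then show ?thesis by (rule AE_distrD[OF Xm])
qed

lemma MI_lower:
  fixes X :: "'a \<Rightarrow> real" and B :: "'a \<Rightarrow> bool"
  assumes M: "prob_space M"
    and X: "distributed M lborel X (\<lambda>x. ennreal (beta_density a b x))"
    and XB: "distributed M (lborel \<Otimes>\<^sub>M count_space UNIV) (\<lambda>\<omega>. (X \<omega>, B \<omega>)) (\<lambda>z. ennreal (beta_bern_density a b z))"
    and ab: "1 \<le> a" "1 \<le> b"
  shows "1 \<le> 6 * (a + b) * prob_space.mutual_information M (exp 1) lborel (count_space UNIV) X B"
proof -
  interpret prob_space M by fact
  define m where "m = a / (a + b)"
  have m01: "0 < m" "m < 1" using ab by (auto simp: m_def)
  have Xm[measurable]: "X \<in> borel_measurable M"
    using distributed_measurable[OF X] by simp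
  have iq: "integrable M (\<lambda>\<omega>. qpol m (X \<omega>))"
    by (rule beta_integrable[OF X ab]) (use m01 in \<open>auto simp: qpol_def intro!: continuous_intros\<close>)
  have ik: "integrable M (\<lambda>\<omega>. kl m (X \<omega>))"
  proof (rule integrable_const_bound[where B="2 + \<bar>ln m\<bar> + \<bar>ln (1 - m)\<bar>"])
    show "AE \<omega> in M. norm (kl m (X \<omega>)) \<le> 2 + \<bar>ln m\<bar> + \<bar>ln (1 - m)\<bar>"
      using AE_beta01[OF X]
    proof eventually_elim
      case (elim \<omega>)
      have "\<bar>X \<omega> * ln (X \<omega> / m)\<bar> \<le> 1 + \<bar>ln m\<bar>" using elim m01 by (intro abs_xln_div_le) auto
      moreover have "\<bar>(1 - X \<omega>) * ln ((1 - X \<omega>) / (1 - m))\<bar> \<le> 1 + \<bar>ln (1 - m)\<bar>"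
        using elim m01 by (intro abs_xln_div_le) auto
      ultimately show ?case unfolding kl_def by simp
    qed
    show "(\<lambda>\<omega>. kl m (X \<omega>)) \<in> borel_measurable M" unfolding kl_def by measurable
  qed
  have "expectation (\<lambda>\<omega>. qpol m (X \<omega>)) \<le> expectation (\<lambda>\<omega>. kl m (X \<omega>))"
  proof (rule integral_mono_AE[OF iq ik])
    show "AE \<omega> in M. qpol m (X \<omega>) \<le> kl m (X \<omega>)"
      using AE_beta01[OF X] by eventually_elim (use m01 in \<open>auto intro: kl_ge_qpol\<close>)
  qed
  also have "\<dots> = mutual_information (exp 1) lborel (count_space UNIV) X B"
    using MI_eq_kl[OF M X XB ab] by (simp add: m_def)
  finally have "expectation (\<lambda>\<omega>. qpol m (X \<omega>)) \<le> mutual_information (exp 1) lborel (count_space UNIV) X B" .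
  moreover have "1 \<le> 6 * (a + b) * expectation (\<lambda>\<omega>. qpol m (X \<omega>))"
    using Eq_bound[OF M X ab] by (simp add: m_def)
  moreover have "0 \<le> a + b" using ab by simp
  ultimately show ?thesis
    by (smt (verit, best) mult_left_mono)
qed

lemma indep_pair_mgf:
  fixes Z :: "'i \<Rightarrow> 'a \<Rightarrow> real"
  assumes M: "prob_space M"
    and ind: "prob_space.indep_vars M (\<lambda>_. borel) Z J"
    and i: "i0 \<in> J" "i1 \<in> J" "i0 \<noteq> i1"
    and X: "distributed M lborel (Z i0) (\<lambda>x. ennreal (beta_density a b x))"
    and Y: "distributed M lborel (Z i1) (\<lambda>x. ennreal (beta_density a b x))"
    and ab: "1 \<le> a" "1 \<le> b"
  shows "prob_space.expectation M (\<lambda>\<omega>. exp (t * (Z i0 \<omega> - Z i1 \<omega>))) \<le> exp (t\<^sup>2 / (4 * (a + b)))"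
    and "integrable M (\<lambda>\<omega>. exp (t * (Z i0 \<omega> - Z i1 \<omega>)))"
proof -
  interpret prob_space M by fact
  define m where "m = a / (a + b)"
  define W where "W i x = (if i = i0 then exp (t * (x - m)) else exp (- t * (x - m)))" for i x
  have ind2: "indep_vars (\<lambda>_. borel) Z {i0, i1}"
    by (rule indep_vars_subset[OF ind]) (use i in auto)
  have ind3: "indep_vars (\<lambda>_. borel) (\<lambda>i \<omega>. W i (Z i \<omega>)) {i0, i1}"
    by (rule indep_vars_compose2[OF ind2]) (auto simp: W_def)
  have int: "integrable M (\<lambda>\<omega>. W i (Z i \<omega>))" if "i \<in> {i0, i1}" for i
  proof -
    have c: "continuous_on UNIV (W i)" unfolding W_def by (cases "i = i0") (auto intro!: continuous_intros)
    show ?thesis using that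
    proof
      assume "i = i0" then show ?thesis using beta_integrable[OF X ab c] by simp
    next
      assume "i \<in> {i1}" then show ?thesis using beta_integrable[OF Y ab c] by simp
    qed
  qed
  have prodeq: "(\<Prod>i\<in>{i0, i1}. W i (Z i \<omega>)) = exp (t * (Z i0 \<omega> - Z i1 \<omega>))" for \<omega>
  proof -
    have "(\<Prod>i\<in>{i0, i1}. W i (Z i \<omega>)) = exp (t * (Z i0 \<omega> - m)) * exp (- t * (Z i1 \<omega> - m))"
      using i by (simp add: W_def)
    also have "\<dots> = exp (t * (Z i0 \<omega> - m) + - t * (Z i1 \<omega> - m))" by (rule mult_exp_exp)
    also have "t * (Z i0 \<omega> - m) + - t * (Z i1 \<omega> - m) = t * (Z i0 \<omega> - Z i1 \<omega>)" by (simp add: algebra_simps)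
    finally show ?thesis .
  qed
  have "integrable M (\<lambda>\<omega>. \<Prod>i\<in>{i0, i1}. W i (Z i \<omega>))"
    by (rule indep_vars_integrable[OF _ ind3 int]) auto
  then show "integrable M (\<lambda>\<omega>. exp (t * (Z i0 \<omega> - Z i1 \<omega>)))"
    by (simp add: prodeq)
  have "expectation (\<lambda>\<omega>. \<Prod>i\<in>{i0, i1}. W i (Z i \<omega>)) = (\<Prod>i\<in>{i0, i1}. expectation (\<lambda>\<omega>. W i (Z i \<omega>)))"
    by (rule indep_vars_lebesgue_integral[OF _ ind3 int]) auto
  also have "\<dots> = expectation (\<lambda>\<omega>. exp (t * (Z i0 \<omega> - m))) * expectation (\<lambda>\<omega>. exp ((- t) * (Z i1 \<omega> - m)))"
    using i by (simp add: W_def)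
  also have "\<dots> \<le> exp (t\<^sup>2 / (8 * (a + b))) * exp ((- t)\<^sup>2 / (8 * (a + b)))"
    using beta_mgf[OF M X ab, of t] beta_mgf[OF M Y ab, of "- t"]
    by (intro mult_mono) (auto simp: m_def intro!: integral_nonneg_AE)
  also have "\<dots> = exp (t\<^sup>2 / (4 * (a + b)))"
  proof -
    have "exp (t\<^sup>2 / (8 * (a + b))) * exp ((- t)\<^sup>2 / (8 * (a + b))) = exp (t\<^sup>2 / (8 * (a + b)) + t\<^sup>2 / (8 * (a + b)))"
      by (simp add: mult_exp_exp)
    also have "t\<^sup>2 / (8 * (a + b)) + t\<^sup>2 / (8 * (a + b)) = t\<^sup>2 / (4 * (a + b))"
      by (rule half_sum)
    finally show ?thesis .
  qed
  finally show "expectation (\<lambda>\<omega>. exp (t * (Z i0 \<omega> - Z i1 \<omega>))) \<le> exp (t\<^sup>2 / (4 * (a + b)))"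
    by (simp add: prodeq)
qed



theorem lemma6:
  fixes M :: "'a measure"
    and N :: nat
    and \<alpha> \<beta> :: "nat \<Rightarrow> real"
    and p ph :: "nat \<Rightarrow> 'a \<Rightarrow> real"
    and b :: "nat \<Rightarrow> 'a \<Rightarrow> bool"
    and \<delta> :: real
  assumes "prob_space M"
    and "N > 0"
    and "\<And>n. n \<in> {1..N} \<Longrightarrow> \<alpha> n \<ge> 1 \<and> \<beta> n \<ge> 1"
    and "\<And>n. n \<in> {1..N} \<Longrightarrow>
           distributed M lborel (p n) (\<lambda>x. ennreal (beta_density (\<alpha> n) (\<beta> n) x))"
    and "\<And>n. n \<in> {1..N} \<Longrightarrow>
           distributed M lborel (ph n) (\<lambda>x. ennreal (beta_density (\<alpha> n) (\<beta> n) x))"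
    and "prob_space.indep_vars M (\<lambda>_. borel)
           (\<lambda>(n, k). if k then ph n else p n) ({1..N} \<times> (UNIV :: bool set))"
    and "\<And>n. n \<in> {1..N} \<Longrightarrow>
           distributed M (lborel \<Otimes>\<^sub>M count_space UNIV) (\<lambda>\<omega>. (p n \<omega>, b n \<omega>))
             (\<lambda>z. ennreal (beta_bern_density (\<alpha> n) (\<beta> n) z))"
    and "0 < \<delta>" and "\<delta> < 1"
  shows "prob_space.expectation M
           (\<lambda>\<omega>. Min ((\<lambda>n. sqrt (6 * prob_space.mutual_information M (exp 1) lborel
                                        (count_space UNIV) (p n) (b n)
                                   * ln (2 * real N / \<delta>))
                           - \<bar>p n \<omega> - ph n \<omega>\<bar> + \<delta>) ` {1..N})) \<ge> 0"
proof -
  interpret prob_space M by (rule assms(1))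
  have N1: "1 \<le> real N" using assms(2) by simp
  have \<delta>: "0 < \<delta>" "\<delta> < 1" using assms(8,9) by auto
  define L where "L = ln (2 * real N / \<delta>)"
  have L0: "0 < L" unfolding L_def using N1 \<delta> by (intro ln_gt_zero) (simp add: field_simps)
  have expL: "exp (- L) = \<delta> / (2 * real N)"
    unfolding L_def using N1 \<delta> by (simp add: exp_minus)
  define I where "I n = mutual_information (exp 1) lborel (count_space UNIV) (p n) (b n)" for n
  define \<nu> where "\<nu> n = \<alpha> n + \<beta> n" for n
  define s where "s n = sqrt (6 * I n * L)" for n
  define l where "l n = 2 * \<nu> n * s n" for n
  define d where "d n \<omega> = p n \<omega> - ph n \<omega>" for n \<omega>
  define g where "g n \<omega> = exp (l n * (d n \<omega> - s n)) + exp (l n * (- d n \<omega> - s n))" for n \<omega>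
  define Z where "Z = (\<lambda>(n, k). if k then ph n else p n)"
  have per_n: "integrable M (g n) \<and> expectation (g n) \<le> \<delta> / real N \<and>
      (AE \<omega> in M. \<delta> - g n \<omega> \<le> s n - \<bar>d n \<omega>\<bar> + \<delta> \<and> 0 \<le> g n \<omega>)" if n: "n \<in> {1..N}" for n
  proof -
    have ab: "1 \<le> \<alpha> n" "1 \<le> \<beta> n" using assms(3)[OF n] by auto
    have \<nu>0: "0 < \<nu> n" using ab by (simp add: \<nu>_def)
    have Ige: "1 \<le> 6 * \<nu> n * I n"
      using MI_lower[OF assms(1) assms(4)[OF n] assms(7)[OF n] ab] by (simp add: \<nu>_def I_def)
    have I0: "0 \<le> I n"
    proof (rule ccontr)
      assume "\<not> 0 \<le> I n"
      then have "6 * \<nu> n * I n < 0" using \<nu>0 by (simp add: mult_pos_neg)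
      then show False using Ige by linarith
    qed
    have s0: "0 \<le> s n" using I0 L0 by (simp add: s_def)
    have s2: "(s n)\<^sup>2 = 6 * I n * L" using I0 L0 by (simp add: s_def)
    have l0: "0 \<le> l n" using \<nu>0 s0 by (simp add: l_def)
    have X0: "distributed M lborel (Z (n, False)) (\<lambda>x. ennreal (beta_density (\<alpha> n) (\<beta> n) x))"
      using assms(4)[OF n] by (simp add: Z_def)
    have X1: "distributed M lborel (Z (n, True)) (\<lambda>x. ennreal (beta_density (\<alpha> n) (\<beta> n) x))"
      using assms(5)[OF n] by (simp add: Z_def)
    have ind: "indep_vars (\<lambda>_. borel) Z ({1..N} \<times> (UNIV :: bool set))"
      using assms(6) by (simp add: Z_def)
    have mgf: "expectation (\<lambda>\<omega>. exp (t * d n \<omega>)) \<le> exp (t\<^sup>2 / (4 * \<nu> n))"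
      and mgfi: "integrable M (\<lambda>\<omega>. exp (t * d n \<omega>))" for t
      using indep_pair_mgf[OF assms(1) ind _ _ _ X0 X1 ab, of t] n
      by (auto simp: Z_def d_def \<nu>_def)
    have key: "expectation (\<lambda>\<omega>. exp (t * d n \<omega> - l n * s n)) \<le> exp (- (\<nu> n * (s n)\<^sup>2))"
      and keyi: "integrable M (\<lambda>\<omega>. exp (t * d n \<omega> - l n * s n))"
      if t: "t = l n \<or> t = - l n" for t
    proof -
      have eq: "(\<lambda>\<omega>. exp (t * d n \<omega> - l n * s n)) = (\<lambda>\<omega>. exp (- (l n * s n)) * exp (t * d n \<omega>))"
        by (rule ext) (simp add: exp_diff exp_minus field_simps)
      show "integrable M (\<lambda>\<omega>. exp (t * d n \<omega> - l n * s n))"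
        unfolding eq by (intro integrable_mult_right mgfi)
      have "expectation (\<lambda>\<omega>. exp (t * d n \<omega> - l n * s n)) = exp (- (l n * s n)) * expectation (\<lambda>\<omega>. exp (t * d n \<omega>))"
        unfolding eq by simp
      also have "\<dots> \<le> exp (- (l n * s n)) * exp (t\<^sup>2 / (4 * \<nu> n))"
        by (intro mult_left_mono mgf) auto
      also have "\<dots> = exp (- (l n * s n) + t\<^sup>2 / (4 * \<nu> n))" by (rule mult_exp_exp)
      also have "- (l n * s n) + t\<^sup>2 / (4 * \<nu> n) = - (\<nu> n * (s n)\<^sup>2)"
        using t \<nu>0 by (auto simp: l_def power2_eq_square field_simps)
      finally show "expectation (\<lambda>\<omega>. exp (t * d n \<omega> - l n * s n)) \<le> exp (- (\<nu> n * (s n)\<^sup>2))" .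
    qed
    have g_eq: "g n = (\<lambda>\<omega>. exp (l n * d n \<omega> - l n * s n) + exp ((- l n) * d n \<omega> - l n * s n))"
      by (rule ext) (simp add: g_def algebra_simps)
    have gi: "integrable M (g n)"
      unfolding g_eq by (intro Bochner_Integration.integrable_add keyi) auto
    have "expectation (g n) = expectation (\<lambda>\<omega>. exp (l n * d n \<omega> - l n * s n)) + expectation (\<lambda>\<omega>. exp ((- l n) * d n \<omega> - l n * s n))"
      unfolding g_eq by (intro Bochner_Integration.integral_add keyi) auto
    also have "\<dots> \<le> exp (- (\<nu> n * (s n)\<^sup>2)) + exp (- (\<nu> n * (s n)\<^sup>2))"
      by (intro add_mono key) auto
    also have "\<dots> \<le> exp (- L) + exp (- L)"
    proof -
      have "L \<le> \<nu> n * (s n)\<^sup>2"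
      proof -
        have "1 * L \<le> (6 * \<nu> n * I n) * L" by (rule mult_right_mono[OF Ige]) (use L0 in simp)
        then show ?thesis by (simp add: s2 mult_ac)
      qed
      then show ?thesis by (intro add_mono) auto
    qed
    also have "\<dots> = \<delta> / real N" using N1 by (simp add: expL)
    finally have Eg: "expectation (g n) \<le> \<delta> / real N" .
    have AEg: "AE \<omega> in M. \<delta> - g n \<omega> \<le> s n - \<bar>d n \<omega>\<bar> + \<delta> \<and> 0 \<le> g n \<omega>"
      using AE_beta01[OF assms(4)[OF n]] AE_beta01[OF assms(5)[OF n]]
    proof eventually_elim
      case (elim \<omega>)
      have d1: "\<bar>d n \<omega>\<bar> \<le> 1" using elim by (auto simp: d_def)
      have e1: "0 < exp (l n * (d n \<omega> - s n))" "0 < exp (l n * (- d n \<omega> - s n))" by auto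
      have "\<bar>d n \<omega>\<bar> - s n \<le> g n \<omega>"
      proof (cases "\<bar>d n \<omega>\<bar> \<le> s n")
        case True then show ?thesis using e1 unfolding g_def by linarith
      next
        case False
        show ?thesis
        proof (cases "0 \<le> d n \<omega>")
          case True
          then have "0 \<le> l n * (d n \<omega> - s n)" using False l0 by simp
          then have "1 \<le> exp (l n * (d n \<omega> - s n))" by simp
          then show ?thesis using e1 d1 s0 unfolding g_def by linarith
        next
          case False2: False
          then have "0 \<le> l n * (- d n \<omega> - s n)" using False l0 by simp
          then have "1 \<le> exp (l n * (- d n \<omega> - s n))" by simp
          then show ?thesis using e1 d1 s0 unfolding g_def by linarith
        qed
      qed
      then show ?case using e1 unfolding g_def by linarith
    qed
    show ?thesis using gi Eg AEg by blast
  qed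
  define F where "F \<omega> = Min ((\<lambda>n. sqrt (6 * mutual_information (exp 1) lborel (count_space UNIV) (p n) (b n)
                                   * ln (2 * real N / \<delta>)) - \<bar>p n \<omega> - ph n \<omega>\<bar> + \<delta>) ` {1..N})" for \<omega>
  have Fn: "(\<lambda>n. sqrt (6 * mutual_information (exp 1) lborel (count_space UNIV) (p n) (b n)
                                   * ln (2 * real N / \<delta>)) - \<bar>p n \<omega> - ph n \<omega>\<bar> + \<delta>) = (\<lambda>n. s n - \<bar>d n \<omega>\<bar> + \<delta>)" for \<omega>
    by (rule ext) (simp add: s_def I_def L_def d_def)
  have AEall: "AE \<omega> in M. \<forall>n\<in>{1..N}. \<delta> - g n \<omega> \<le> s n - \<bar>d n \<omega>\<bar> + \<delta> \<and> 0 \<le> g n \<omega>"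
    by (rule AE_finite_allI) (use per_n in auto)
  have AEF: "AE \<omega> in M. \<delta> - (\<Sum>n\<in>{1..N}. g n \<omega>) \<le> F \<omega>"
    using AEall
  proof eventually_elim
    case (elim \<omega>)
    have ne: "{1..N} \<noteq> {}" using assms(2) by simp
    have "\<delta> - (\<Sum>n\<in>{1..N}. g n \<omega>) \<le> s k - \<bar>d k \<omega>\<bar> + \<delta>" if k: "k \<in> {1..N}" for k
    proof -
      have "g k \<omega> \<le> (\<Sum>n\<in>{1..N}. g n \<omega>)"
        by (rule member_le_sum) (use elim k in auto)
      then show ?thesis using elim k by force
    qed
    then show ?case unfolding F_def Fn using ne by (subst Min_ge_iff) auto
  qed
  show ?thesis
  proof (cases "integrable M F")
    case True
    have gi: "integrable M (\<lambda>\<omega>. \<Sum>n\<in>{1..N}. g n \<omega>)"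
      by (rule Bochner_Integration.integrable_sum) (use per_n in auto)
    have "expectation (\<lambda>\<omega>. \<delta> - (\<Sum>n\<in>{1..N}. g n \<omega>)) \<le> expectation F"
      by (rule integral_mono_AE[OF _ True AEF]) (use gi in auto)
    moreover have "expectation (\<lambda>\<omega>. \<delta> - (\<Sum>n\<in>{1..N}. g n \<omega>)) = \<delta> - (\<Sum>n\<in>{1..N}. expectation (g n))"
      using gi per_n by (simp add: Bochner_Integration.integral_diff Bochner_Integration.integral_sum prob_space)
    moreover have "(\<Sum>n\<in>{1..N}. expectation (g n)) \<le> (\<Sum>n\<in>{1..N}. \<delta> / real N)"
      by (rule sum_mono) (use per_n in auto)
    moreover have "(\<Sum>n\<in>{1..N}. \<delta> / real N) = \<delta>" using N1 by simp
    ultimately show ?thesis unfolding F_def by linarith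
  next
    case False
    then show ?thesis unfolding F_def[abs_def] by (simp add: not_integrable_integral_eq)
  qed
qed


end
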